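(* Let $U\subset\mathbb{R}^2$, and let measurements be modeled by a Gaussian process with squared-exponential kernel $k(x,x')=\sigma_0^2\exp\!\left(-\frac{\|x-x'\|^2}{2l^2}\right)$ ($\sigma_0^2>0$, $l>0$) and i.i.d. additive Gaussian noise of variance $\omega^2>0$. Let $0<\Delta<\sigma_0^2$, let $x\in U$ be a test location and let $X$ be a finite collection of measurement locations (repetitions allowed). If there is a measurement location $x_i\in X$ at distance $r$ from $x$ at which $n_{\text{suff}}\ge 1$ measurements are taken, with $$r\le l\sqrt{-\log\left(\left(1+\frac{\omega^2}{n_{\text{suff}}\sigma_0^2}\right)\left(1-\frac{\Delta}{\sigma_0^2}\right)\right)},$$ then $MSE(x)\le\Delta$.
   Context: For measurement locations $X=(x_1,\dots,x_n)$ (a location repeated $m$ times means $m$ measurements there), the GP posterior variance at $x$ is $\hat\sigma^2_{x|X}=k(x,x)-\mathbf{k}(x,X)\left[\mathbf{K}(X,X)+\omega^2\mathbf{I}\right]^{-1}\mathbf{k}(X,x)$, where $\mathbf{K}(X,X)$ has entries $k(x_p,x_q)$ and $\mathbf{k}(x,X)=(k(x,x_1),\dots,k(x,x_n))$. The MSE of the GP prediction at $x$ is $MSE(x)=\hat\sigma^2_{x|X}$. *)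

theory Defs
  imports "HOL-Analysis.Analysis" "Jordan_Normal_Form.Gauss_Jordan_Elimination"
begin

definition se_kernel :: "real \<Rightarrow> real \<Rightarrow> real^2 \<Rightarrow> real^2 \<Rightarrow> real" where
  "se_kernel s0sq l x x' = s0sq * exp (- (norm (x - x'))\<^sup>2 / (2 * l\<^sup>2))"

text \<open>GP posterior variance at x given measurement locations X (a list; repetitions = repeated
 measurements), kernel k and noise variance wsq = omega^2:
 k(x,x) - k(x,X) [K(X,X) + omega^2 I]^{-1} k(X,x).\<close>
definition post_var :: "('p \<Rightarrow> 'p \<Rightarrow> real) \<Rightarrow> real \<Rightarrow> 'p list \<Rightarrow> 'p \<Rightarrow> real" where
  "post_var k wsq X x =
     (let n = length X;
          KX = Matrix.mat n n (\<lambda>(p, q). k (X ! p) (X ! q));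
          kv = Matrix.vec n (\<lambda>p. k x (X ! p));
          M = KX + wsq \<cdot>\<^sub>m (1\<^sub>m n)
      in k x x - Matrix.scalar_prod kv (the (mat_inverse M) *\<^sub>v kv))"

text \<open>MSE of the GP prediction, which equals the posterior variance.\<close>
definition MSE :: "('p \<Rightarrow> 'p \<Rightarrow> real) \<Rightarrow> real \<Rightarrow> 'p list \<Rightarrow> 'p \<Rightarrow> real" where
  "MSE k wsq X x = post_var k wsq X x"

end

theory Submission
  imports Defs "Jordan_Normal_Form.Determinant"
begin
definition psdk :: "('p \<Rightarrow> 'p \<Rightarrow> real) \<Rightarrow> bool" where
  "psdk K \<longleftrightarrow> (\<forall>n (a::nat\<Rightarrow>real) z. 0 \<le> (\<Sum>p<n. \<Sum>q<n. a p * a q * K (z p) (z q)))"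

lemma psdkD: fixes n :: nat shows "psdk K \<Longrightarrow> 0 \<le> (\<Sum>p<n. \<Sum>q<n. a p * a q * K (z p) (z q))"
  unfolding psdk_def by blast

lemma psdk_one: "psdk (\<lambda>x y. 1)"
  unfolding psdk_def
proof (intro allI)
  fix n :: nat and a :: "nat \<Rightarrow> real" and z :: "nat \<Rightarrow> 'a"
  have "(\<Sum>p<n. a p) * (\<Sum>p<n. a p) = (\<Sum>p<n. \<Sum>q<n. a p * a q)" by (rule sum_product)
  moreover have "0 \<le> (\<Sum>p<n. a p) * (\<Sum>p<n. a p)" by simp
  ultimately show "0 \<le> (\<Sum>p<n. \<Sum>q<n. a p * a q * (\<lambda>x y. 1::real) (z p) (z q))" by simp
qed

lemma psdk_scale: assumes "psdk K" "c \<ge> 0" shows "psdk (\<lambda>x y. c * K x y)"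
  unfolding psdk_def
proof (intro allI)
  fix n :: nat and a :: "nat \<Rightarrow> real" and z :: "nat \<Rightarrow> 'a"
  have eqn: "(\<Sum>p<n. \<Sum>q<n. a p * a q * (c * K (z p) (z q))) = c * (\<Sum>p<n. \<Sum>q<n. a p * a q * K (z p) (z q))"
    unfolding sum_distrib_left by (intro sum.cong refl) simp
  have "0 \<le> (\<Sum>p<n. \<Sum>q<n. a p * a q * K (z p) (z q))" using assms(1) by (rule psdkD)
  then show "0 \<le> (\<Sum>p<n. \<Sum>q<n. a p * a q * (c * K (z p) (z q)))"
    unfolding eqn using assms(2) by simp
qed

lemma psdk_fac: assumes "psdk K" shows "psdk (\<lambda>x y. f x * f y * K x y)"
  unfolding psdk_def
proof (intro allI)
  fix n :: nat and a :: "nat \<Rightarrow> real" and z :: "nat \<Rightarrow> 'a"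
  have eqn: "(\<Sum>p<n. \<Sum>q<n. a p * a q * (f (z p) * f (z q) * K (z p) (z q))) =
        (\<Sum>p<n. \<Sum>q<n. (\<lambda>p. a p * f (z p)) p * (\<lambda>p. a p * f (z p)) q * K (z p) (z q))"
    by (intro sum.cong refl) simp
  show "0 \<le> (\<Sum>p<n. \<Sum>q<n. a p * a q * (f (z p) * f (z q) * K (z p) (z q)))"
    unfolding eqn using assms(1) by (rule psdkD)
qed

lemma psdk_exp: assumes "psdk K" "s \<ge> 0" shows "psdk (\<lambda>x y. K x y * exp (s * g x * g y))"
  unfolding psdk_def
proof (intro allI)
  fix n :: nat and a :: "nat \<Rightarrow> real" and z :: "nat \<Rightarrow> 'a"
  define T where "T k = (s^k / fact k) * (\<Sum>p<n. \<Sum>q<n. (a p * g (z p)^k) * (a q * g (z q)^k) * K (z p) (z q))" for k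
  have e: "(\<lambda>k. a p * a q * K (z p) (z q) * ((s^k / fact k) * (g (z p)^k * g (z q)^k))) sums
      (a p * a q * (K (z p) (z q) * exp (s * g (z p) * g (z q))))" for p q
  proof -
    have "(\<lambda>k. (s * g (z p) * g (z q))^k /\<^sub>R fact k) sums exp (s * g (z p) * g (z q))"
      by (rule exp_converges)
    moreover have "(s * g (z p) * g (z q))^k /\<^sub>R fact k = (s^k / fact k) * (g (z p)^k * g (z q)^k)" for k
      by (simp add: power_mult_distrib divide_inverse)
    ultimately have "(\<lambda>k. (s^k / fact k) * (g (z p)^k * g (z q)^k)) sums exp (s * g (z p) * g (z q))"
      by simp
    from sums_mult[OF this, of "a p * a q * K (z p) (z q)"] show ?thesis by (simp only: mult.assoc)
  qed
  have "(\<lambda>k. \<Sum>p<n. \<Sum>q<n. a p * a q * K (z p) (z q) * ((s^k / fact k) * (g (z p)^k * g (z q)^k))) sums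
      (\<Sum>p<n. \<Sum>q<n. a p * a q * (K (z p) (z q) * exp (s * g (z p) * g (z q))))"
    by (intro sums_sum e)
  moreover have "(\<Sum>p<n. \<Sum>q<n. a p * a q * K (z p) (z q) * ((s^k / fact k) * (g (z p)^k * g (z q)^k))) = T k" for k
    unfolding T_def sum_distrib_left by (intro sum.cong refl) (simp add: algebra_simps)
  ultimately have S: "T sums (\<Sum>p<n. \<Sum>q<n. a p * a q * (K (z p) (z q) * exp (s * g (z p) * g (z q))))"
    by simp
  have "T k \<ge> 0" for k
    unfolding T_def using assms(2) psdkD[OF assms(1)]
    by (intro mult_nonneg_nonneg) auto
  then have "0 \<le> suminf T" using S by (intro suminf_nonneg) (auto dest: sums_summable)
  then show "0 \<le> (\<Sum>p<n. \<Sum>q<n. a p * a q * (K (z p) (z q) * exp (s * g (z p) * g (z q))))"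
    using sums_unique[OF S] by linarith
qed
lemma se_psd: assumes "s0sq > 0" "l > 0" shows "psdk (se_kernel s0sq l)"
proof -
  define f where "f x = exp (- (norm x)\<^sup>2 / (2 * l\<^sup>2))" for x :: "real^2"
  have eq: "se_kernel s0sq l = (\<lambda>x y. s0sq * (f x * f y * ((1 * exp ((1/l\<^sup>2) * x$1 * y$1)) * exp ((1/l\<^sup>2) * x$2 * y$2))))"
  proof (intro ext)
    fix x y :: "real^2"
    have n: "(norm (x - y))\<^sup>2 = (norm x)\<^sup>2 + (norm y)\<^sup>2 - 2 * (x$1 * y$1 + x$2 * y$2)"
      by (simp add: power2_norm_eq_inner inner_diff_left inner_diff_right inner_vec_def sum_2 inner_commute algebra_simps)
    show "se_kernel s0sq l x y = s0sq * (f x * f y * ((1 * exp ((1/l\<^sup>2) * x$1 * y$1)) * exp ((1/l\<^sup>2) * x$2 * y$2)))"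
    proof -
      have "- (norm (x - y))\<^sup>2 / (2 * l\<^sup>2) = - (norm x)\<^sup>2 / (2 * l\<^sup>2) + - (norm y)\<^sup>2 / (2 * l\<^sup>2)
         + ((1/l\<^sup>2) * x$1 * y$1 + (1/l\<^sup>2) * x$2 * y$2)"
        unfolding n using assms(2) by (simp add: field_simps)
      then have "exp (- (norm (x - y))\<^sup>2 / (2 * l\<^sup>2)) = exp (- (norm x)\<^sup>2 / (2 * l\<^sup>2) + - (norm y)\<^sup>2 / (2 * l\<^sup>2)
         + ((1/l\<^sup>2) * x$1 * y$1 + (1/l\<^sup>2) * x$2 * y$2))" by (rule arg_cong)
      also have "\<dots> = exp (- (norm x)\<^sup>2 / (2 * l\<^sup>2)) * exp (- (norm y)\<^sup>2 / (2 * l\<^sup>2))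
         * (1 * exp ((1/l\<^sup>2) * x$1 * y$1) * exp ((1/l\<^sup>2) * x$2 * y$2))"
        by (simp only: exp_add mult_1_left)
      finally show ?thesis unfolding se_kernel_def f_def by simp
    qed
  qed
  show ?thesis unfolding eq
    by (intro psdk_scale psdk_fac psdk_exp psdk_one) (use assms in auto)
qed

lemma quad:
  fixes Mf :: "nat \<Rightarrow> nat \<Rightarrow> real"
  assumes sym: "\<And>p q. Mf p q = Mf q p"
    and psd: "\<And>b. 0 \<le> (\<Sum>p<n. \<Sum>q<n. b p * b q * Mf p q)"
    and eq: "\<And>p. p < n \<Longrightarrow> (\<Sum>q<n. Mf p q * w q) = c p"
  shows "2 * (\<Sum>p<n. a p * c p) - (\<Sum>p<n. \<Sum>q<n. a p * a q * Mf p q) \<le> (\<Sum>p<n. c p * w p)"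
proof -
  have 0: "0 \<le> (\<Sum>p<n. \<Sum>q<n. (a p - w p) * (a q - w q) * Mf p q)" by (rule psd)
  have 1: "(\<Sum>p<n. \<Sum>q<n. (a p - w p) * (a q - w q) * Mf p q) =
     (\<Sum>p<n. \<Sum>q<n. a p * a q * Mf p q) - (\<Sum>p<n. \<Sum>q<n. a p * (Mf p q * w q))
     - (\<Sum>p<n. \<Sum>q<n. a q * (Mf q p * w p)) + (\<Sum>p<n. \<Sum>q<n. w p * (Mf p q * w q))"
    by (simp add: algebra_simps sum_subtractf sum.distrib sym)
  have "(\<Sum>p<n. \<Sum>q<n. a q * (Mf q p * w p)) = (\<Sum>q<n. \<Sum>p<n. a q * (Mf q p * w p))"
    by (rule sum.swap)
  also have "\<dots> = (\<Sum>p<n. a p * c p)"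
    by (simp add: sum_distrib_left[symmetric] eq)
  finally have 2: "(\<Sum>p<n. \<Sum>q<n. a q * (Mf q p * w p)) = (\<Sum>p<n. a p * c p)" .
  have 3: "(\<Sum>p<n. \<Sum>q<n. a p * (Mf p q * w q)) = (\<Sum>p<n. a p * c p)"
    by (simp add: sum_distrib_left[symmetric] eq)
  have 4: "(\<Sum>p<n. \<Sum>q<n. w p * (Mf p q * w q)) = (\<Sum>p<n. c p * w p)"
  proof (rule sum.cong[OF refl])
    fix p assume "p \<in> {..<n}"
    then have "(\<Sum>q<n. Mf p q * w q) = c p" using eq by simp
    then show "(\<Sum>q<n. w p * (Mf p q * w q)) = c p * w p"
    proof -
      have "(\<Sum>q<n. w p * (Mf p q * w q)) = w p * (\<Sum>q<n. Mf p q * w q)"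
        by (rule sum_distrib_left[symmetric])
      then show ?thesis using \<open>_ = c p\<close> by simp
    qed
  qed
  show ?thesis using 0 1 2 3 4 by linarith
qed

theorem lemma2:
  fixes U :: "(real^2) set" and s0sq l wsq \<Delta> r :: real
    and x :: "real^2" and X :: "(real^2) list" and xi :: "real^2" and n_suff :: nat
  assumes "s0sq > 0" and "l > 0" and "wsq > 0"
    and "0 < \<Delta>" and "\<Delta> < s0sq"
    and "x \<in> U" and "set X \<subseteq> U"
    and "xi \<in> set X" and "dist x xi = r"
    and "n_suff \<ge> 1" and "count_list X xi = n_suff"
    and "r \<le> l * sqrt (- ln ((1 + wsq / (real n_suff * s0sq)) * (1 - \<Delta> / s0sq)))"
  shows "MSE (se_kernel s0sq l) wsq X x \<le> \<Delta>"
proof -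
  let ?k = "se_kernel s0sq l"
  define n where "n = length X"
  define KX where "KX = Matrix.mat n n (\<lambda>(p, q). ?k (X ! p) (X ! q))"
  define kv where "kv = Matrix.vec n (\<lambda>p. ?k x (X ! p))"
  define M where "M = KX + wsq \<cdot>\<^sub>m (1\<^sub>m n)"
  have MSE_eq: "MSE ?k wsq X x = ?k x x - Matrix.scalar_prod kv (the (mat_inverse M) *\<^sub>v kv)"
    unfolding MSE_def post_var_def Let_def n_def KX_def kv_def M_def by simp
  have Mc: "M \<in> carrier_mat n n" unfolding M_def KX_def by simp
  define Mf where "Mf p q = ?k (X!p) (X!q) + (if p = q then wsq else 0)" for p q
  have Mij: "M $$ (p,q) = Mf p q" if "p < n" "q < n" for p q
    unfolding M_def KX_def Mf_def using that by simp
  have ksym: "?k u v = ?k v u" for u v unfolding se_kernel_def by (simp add: norm_minus_commute)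
  have kself: "?k u u = s0sq" for u unfolding se_kernel_def by simp
  have Mfsym: "Mf p q = Mf q p" for p q unfolding Mf_def using ksym by simp
  have psdK: "psdk ?k" by (rule se_psd) (use assms in auto)
  have Qge: "wsq * (\<Sum>p<n. (b p)\<^sup>2) \<le> (\<Sum>p<n. \<Sum>q<n. b p * b q * Mf p q)" for b
  proof -
    have "(\<Sum>p<n. \<Sum>q<n. b p * b q * Mf p q) = (\<Sum>p<n. \<Sum>q<n. b p * b q * ?k (X!p) (X!q))
        + (\<Sum>p<n. \<Sum>q<n. b p * b q * (if p = q then wsq else 0))"
      unfolding Mf_def by (simp add: distrib_left sum.distrib)
    also have "(\<Sum>p<n. \<Sum>q<n. b p * b q * (if p = q then wsq else 0)) = (\<Sum>p<n. wsq * (b p)\<^sup>2)"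
    proof (rule sum.cong[OF refl])
      fix p assume "p \<in> {..<n}"
      have "(\<Sum>q<n. b p * b q * (if p = q then wsq else 0)) = (\<Sum>q<n. if p = q then b p * b q * wsq else 0)"
        by (intro sum.cong refl) simp
      also have "\<dots> = wsq * (b p)\<^sup>2" using \<open>p \<in> {..<n}\<close> by (simp add: power2_eq_square)
      finally show "(\<Sum>q<n. b p * b q * (if p = q then wsq else 0)) = wsq * (b p)\<^sup>2" .
    qed
    also have "\<dots> = wsq * (\<Sum>p<n. (b p)\<^sup>2)" by (simp add: sum_distrib_left)
    finally show ?thesis using psdkD[OF psdK, where n=n and a=b and z="\<lambda>p. X!p"] by simp
  qed
  have Qnn: "0 \<le> (\<Sum>p<n. \<Sum>q<n. b p * b q * Mf p q)" for b
    using Qge[of b] assms(3) by (smt (verit) mult_nonneg_nonneg sum_nonneg zero_le_power2)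
  have Mv_sum: "vec_index (M *\<^sub>v v) p = (\<Sum>q<n. Mf p q * vec_index v q)" if "p < n" "v \<in> carrier_vec n" for p v
  proof -
    have "vec_index (M *\<^sub>v v) p = (\<Sum>q\<in>{0..<n}. vec_index (Matrix.row M p) q * vec_index v q)"
      using that Mc by (simp add: mult_mat_vec_def scalar_prod_def)
    also have "\<dots> = (\<Sum>q<n. Mf p q * vec_index v q)"
      using that Mc by (intro sum.cong) (auto simp: Mij atLeast0LessThan)
    finally show ?thesis .
  qed
  have detnz: "Determinant.det M \<noteq> 0"
  proof
    assume "Determinant.det M = 0"
    then obtain v where v: "v \<in> carrier_vec n" "v \<noteq> 0\<^sub>v n" "M *\<^sub>v v = 0\<^sub>v n"
      using det_0_iff_vec_prod_zero[OF Mc] by auto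
    have "\<exists>i<n. vec_index v i \<noteq> 0"
    proof (rule ccontr)
      assume "\<not> (\<exists>i<n. vec_index v i \<noteq> 0)"
      then have "v = 0\<^sub>v n" using v(1) by (intro eq_vecI) auto
      with v(2) show False ..
    qed
    then obtain i where i: "i < n" "vec_index v i \<noteq> 0" by blast
    have "(\<Sum>p<n. \<Sum>q<n. vec_index v p * vec_index v q * Mf p q) = (\<Sum>p<n. vec_index v p * (\<Sum>q<n. Mf p q * vec_index v q))"
      by (simp add: sum_distrib_left mult_ac)
    also have "\<dots> = 0"
    proof (intro sum.neutral ballI)
      fix p assume "p \<in> {..<n}"
      then have "(\<Sum>q<n. Mf p q * vec_index v q) = 0" using Mv_sum[of p v] v by simp
      then show "vec_index v p * (\<Sum>q<n. Mf p q * vec_index v q) = 0" by simp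
    qed
    finally have z: "(\<Sum>p<n. \<Sum>q<n. vec_index v p * vec_index v q * Mf p q) = 0" .
    have "0 < (\<Sum>p<n. (vec_index v p)\<^sup>2)"
      by (rule sum_pos2[of _ i]) (use i in auto)
    then have "0 < wsq * (\<Sum>p<n. (vec_index v p)\<^sup>2)" using assms(3) by simp
    with Qge[of "\<lambda>p. vec_index v p"] z show False by simp
  qed
  have unit: "M \<in> Units (ring_mat TYPE(real) n undefined)"
    by (rule det_non_zero_imp_unit[OF Mc detnz])
  obtain B where B: "mat_inverse M = Some B"
    using mat_inverse(1)[OF Mc, of undefined] unit by (cases "mat_inverse M") auto
  from mat_inverse(2)[OF Mc B] have MB: "M * B = 1\<^sub>m n" and Bc: "B \<in> carrier_mat n n" by auto
  define w where "w = B *\<^sub>v kv"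
  have kvc: "kv \<in> carrier_vec n" unfolding kv_def by simp
  have wc: "w \<in> carrier_vec n" unfolding w_def using Bc kvc by simp
  have Mw: "M *\<^sub>v w = kv" unfolding w_def using assoc_mult_mat_vec[OF Mc Bc kvc, symmetric] MB kvc by simp
  have eqw: "(\<Sum>q<n. Mf p q * vec_index w q) = ?k x (X!p)" if "p < n" for p
    using Mv_sum[OF that wc] Mw that unfolding kv_def by simp
  have post: "MSE ?k wsq X x = s0sq - (\<Sum>p<n. ?k x (X!p) * vec_index w p)"
  proof -
    have "Matrix.scalar_prod kv w = (\<Sum>p<n. ?k x (X!p) * vec_index w p)"
      using wc by (simp add: scalar_prod_def kv_def atLeast0LessThan)
    then show ?thesis unfolding MSE_eq B option.sel w_def[symmetric] kself by simp
  qed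
  define S where "S = {p. p < n \<and> X!p = xi}"
  have "{i. i < length X \<and> xi = X!i} = S" unfolding S_def n_def by auto
  then have cardS: "card S = n_suff"
    using assms(11) by (simp add: count_list_eq_length_filter length_filter_conv_card)
  have Ssub: "S \<subseteq> {..<n}" unfolding S_def by auto
  have finS: "finite S" using Ssub finite_subset by blast
  define kx where "kx = ?k x xi"
  define N where "N = real n_suff"
  define D where "D = N * s0sq + wsq"
  define cc where "cc = kx / D"
  define a where "a p = (if X!p = xi then cc else 0)" for p
  have main: "2 * (\<Sum>p<n. a p * ?k x (X!p)) - (\<Sum>p<n. \<Sum>q<n. a p * a q * Mf p q) \<le> (\<Sum>p<n. ?k x (X!p) * vec_index w p)"
    by (rule quad[where Mf = Mf and w = "\<lambda>q. vec_index w q" and c = "\<lambda>p. ?k x (X!p)"])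
       (use Mfsym Qnn eqw in auto)
  have sumIf: "(\<Sum>p<n. if p \<in> S then g p else 0) = (\<Sum>p\<in>S. g p)" for g :: "nat \<Rightarrow> real"
    using sum.inter_restrict[of "{..<n}" g S] Ssub by (simp add: Int_absorb1)
  have s1: "(\<Sum>p<n. a p * ?k x (X!p)) = N * cc * kx"
  proof -
    have "(\<Sum>p<n. a p * ?k x (X!p)) = (\<Sum>p<n. if p \<in> S then cc * kx else 0)"
      by (intro sum.cong refl) (auto simp: a_def S_def kx_def)
    also have "\<dots> = N * cc * kx" unfolding sumIf using cardS by (simp add: N_def)
    finally show ?thesis .
  qed
  have s2: "(\<Sum>p<n. \<Sum>q<n. a p * a q * Mf p q) = N * (cc * cc * D)"
  proof -
    have inner: "(\<Sum>q<n. a p * a q * Mf p q) = cc * cc * D" if "p \<in> S" for p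
    proof -
      have "(\<Sum>q<n. a p * a q * Mf p q) = (\<Sum>q<n. if q \<in> S then cc * cc * s0sq + (if p = q then cc * cc * wsq else 0) else 0)"
        using that by (intro sum.cong refl) (auto simp: a_def S_def Mf_def kself algebra_simps)
      also have "\<dots> = (\<Sum>q\<in>S. cc * cc * s0sq + (if p = q then cc * cc * wsq else 0))" by (rule sumIf)
      also have "\<dots> = N * (cc * cc * s0sq) + cc * cc * wsq"
        using that finS cardS by (simp add: sum.distrib N_def)
      finally show ?thesis unfolding D_def by (simp add: algebra_simps)
    qed
    have "(\<Sum>p<n. \<Sum>q<n. a p * a q * Mf p q) = (\<Sum>p<n. if p \<in> S then cc * cc * D else 0)"
    proof (rule sum.cong[OF refl])
      fix p assume p: "p \<in> {..<n}"
      show "(\<Sum>q<n. a p * a q * Mf p q) = (if p \<in> S then cc * cc * D else 0)"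
      proof (cases "p \<in> S")
        case True
        then show ?thesis using inner by simp
      next
        case False
        then have "a p = 0" using p unfolding a_def S_def by auto
        then show ?thesis using False by simp
      qed
    qed
    also have "\<dots> = N * (cc * cc * D)" unfolding sumIf using cardS by (simp add: N_def)
    finally show ?thesis .
  qed
  have Npos: "N \<ge> 1" unfolding N_def using assms(10) by simp
  have Dpos: "D > 0" unfolding D_def using Npos assms(1,3) by (simp add: add_pos_pos)
  have red: "2 * (N * cc * kx) - N * (cc * cc * D) = N * kx\<^sup>2 / D"
    unfolding cc_def using Dpos by (simp add: field_simps power2_eq_square)
  define C where "C = (1 + wsq / (N * s0sq)) * (1 - \<Delta> / s0sq)"
  define E where "E = exp (- r\<^sup>2 / l\<^sup>2)"
  have Cpos: "C > 0" unfolding C_def using assms(1,3,5) Npos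
    by (intro mult_pos_pos) (auto simp: field_simps intro!: add_pos_pos)
  have r0: "0 \<le> r" using assms(9) by auto
  have rb: "r \<le> l * sqrt (- ln C)" using assms(12) unfolding C_def N_def .
  have sq0: "0 \<le> sqrt (- ln C)"
  proof (rule ccontr)
    assume "\<not> ?thesis"
    then have "l * sqrt (- ln C) < 0" using assms(2) by (simp add: mult_pos_neg)
    with rb r0 show False by simp
  qed
  then have L0: "0 \<le> - ln C" by simp
  have "r / l \<le> sqrt (- ln C)" using rb assms(2) by (simp add: pos_divide_le_eq mult.commute)
  then have "(r / l)\<^sup>2 \<le> (sqrt (- ln C))\<^sup>2" using r0 assms(2) by (intro power_mono) auto
  then have "r\<^sup>2 / l\<^sup>2 \<le> - ln C" using L0 by (simp add: power_divide)
  then have "ln C \<le> - r\<^sup>2 / l\<^sup>2" by simp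
  then have "exp (ln C) \<le> E" unfolding E_def by simp
  then have CE: "C \<le> E" using Cpos by simp
  have kx2: "kx\<^sup>2 = s0sq\<^sup>2 * E"
  proof -
    have "norm (x - xi) = r" using assms(9) by (simp add: dist_norm)
    then have "kx = s0sq * exp (- r\<^sup>2 / (2 * l\<^sup>2))" unfolding kx_def se_kernel_def by simp
    moreover have "exp (- r\<^sup>2 / (2 * l\<^sup>2)) * exp (- r\<^sup>2 / (2 * l\<^sup>2)) = E"
      unfolding E_def exp_add[symmetric] by simp
    ultimately show ?thesis by (simp add: power2_eq_square algebra_simps)
  qed
  have Ceq: "N * s0sq\<^sup>2 * C = (s0sq - \<Delta>) * D"
    unfolding C_def D_def using assms(1) Npos by (simp add: field_simps power2_eq_square)
  have "(s0sq - \<Delta>) * D \<le> N * s0sq\<^sup>2 * E"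
    unfolding Ceq[symmetric] using CE Npos by (intro mult_left_mono) auto
  then have "s0sq - \<Delta> \<le> N * kx\<^sup>2 / D" unfolding kx2 using Dpos by (simp add: pos_le_divide_eq mult_ac)
  then show ?thesis using post main s1 s2 red by linarith
qed

end
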